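(* Under the standing assumptions, let $\vec v$ be a demand vector with at least four non-zero entries. Then there exists a task $t$ of type 2 with respect to $\vec v$ such that $\vec v$ has at least four non-empty tasks distinct from $t$. Moreover, for any such task $t$, letting $i$ be the intermediate task of $t$ with respect to $\vec v$ and letting $\vec v'$ be the demand vector such that $(\vec v,\vec v')$ is $(i,t)$-adjacent, the task $t$ is of type 2 with intermediate task $i$ with respect to $\vec v'$.
   Context: Standing assumptions: $n\ge 4$, $k\ge 5$, and $f_1,\dots,f_n$ are functions from demand vectors to $[k]$ satisfying the demand (for every demand vector $\vec v$ and task $j$, exactly $v_j$ agents $a$ have $f_a(\vec v)=j$), with maximum switching cost at most $2$. A demand vector is $\vec v=(v_1,\dots,v_k)$ of non-negative integers with $\sum v_j=n$; task $j$ is non-empty in $\vec v$ if $v_j\ge1$. The switching cost of $(\vec v,\vec v')$ is the number of agents $a$ with $f_a(\vec v)\ne f_a(\vec v')$; $\vec v,\vec v'$ are adjacent if $\|\vec v-\vec v'\|_1=2$. An ordered pair $(\vec v_1,\vec v_2)$ is $(s,t)$-adjacent if $s\ne t$ and $\vec v_2$ is obtained from $\vec v_1$ by moving one unit of demand from task $s$ to task $t$. Agent $a$ is $(i,j)$-mobile with respect to $(\vec v_1,\vec v_2)$ if $f_a(\vec v_1)=i$, $f_a(\vec v_2)=j$, $i\ne j$. If $(\vec v_1,\vec v_2)$ is $(s,t)$-adjacent with switching cost $2$, then there is a task $i\notin\{s,t\}$ such that one switching agent is $(s,i)$-mobile and the other is $(i,t)$-mobile; $i$ is called the intermediate task of $(\vec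 v_1,\vec v_2)$. A task $t$ is of type 1 with respect to $\vec v$ if for every task $s\ne t$ non-empty in $\vec v$, the $(s,t)$-adjacent pair starting at $\vec v$ has switching cost $1$. A task $t$ is of type 2 with respect to $\vec v$ if there exist a task $i$ and an agent $a$ such that for every task $s\notin\{i,t\}$ non-empty in $\vec v$, the $(s,t)$-adjacent pair starting at $\vec v$ has switching cost $2$, intermediate task $i$, and $(i,t)$-mobile agent $a$; then $i$ is the intermediate task of $t$ with respect to $\vec v$. *)

theory Defs
  imports Main
begin

text \<open>Agents are 1..n, tasks are 1..k. A demand vector is a function nat => nat,
  zero outside the tasks 1..k, summing to n over the tasks. An assignment is
  f :: agent => demand vector => task.\<close>

definition demand_vec :: "nat \<Rightarrow> nat \<Rightarrow> (nat \<Rightarrow> nat) \<Rightarrow> bool" where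
  "demand_vec n k v \<longleftrightarrow> (\<forall>j. j \<notin> {1..k} \<longrightarrow> v j = 0) \<and> (\<Sum>j\<in>{1..k}. v j) = n"

definition satisfies_demand :: "nat \<Rightarrow> nat \<Rightarrow> (nat \<Rightarrow> (nat \<Rightarrow> nat) \<Rightarrow> nat) \<Rightarrow> bool" where
  "satisfies_demand n k f \<longleftrightarrow> (\<forall>v. demand_vec n k v \<longrightarrow>
      (\<forall>a\<in>{1..n}. f a v \<in> {1..k}) \<and>
      (\<forall>j\<in>{1..k}. card {a\<in>{1..n}. f a v = j} = v j))"

definition switching_cost :: "nat \<Rightarrow> (nat \<Rightarrow> (nat \<Rightarrow> nat) \<Rightarrow> nat) \<Rightarrow> (nat \<Rightarrow> nat) \<Rightarrow> (nat \<Rightarrow> nat) \<Rightarrow> nat" where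
  "switching_cost n f v v' = card {a\<in>{1..n}. f a v \<noteq> f a v'}"

definition adjacent :: "nat \<Rightarrow> (nat \<Rightarrow> nat) \<Rightarrow> (nat \<Rightarrow> nat) \<Rightarrow> bool" where
  "adjacent k v v' \<longleftrightarrow> (\<Sum>j\<in>{1..k}. \<bar>int (v j) - int (v' j)\<bar>) = 2"

definition max_switching_cost_le :: "nat \<Rightarrow> nat \<Rightarrow> (nat \<Rightarrow> (nat \<Rightarrow> nat) \<Rightarrow> nat) \<Rightarrow> nat \<Rightarrow> bool" where
  "max_switching_cost_le n k f c \<longleftrightarrow> (\<forall>v v'. demand_vec n k v \<longrightarrow> demand_vec n k v' \<longrightarrow>
      adjacent k v v' \<longrightarrow> switching_cost n f v v' \<le> c)"

text \<open>The demand vector obtained from v by moving one unit of demand from s to t;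
  (v, move s t v) is (s,t)-adjacent when s, t are distinct tasks and v s >= 1.\<close>
definition move :: "nat \<Rightarrow> nat \<Rightarrow> (nat \<Rightarrow> nat) \<Rightarrow> (nat \<Rightarrow> nat)" where
  "move s t v = v(s := v s - 1, t := v t + 1)"

definition mobile :: "(nat \<Rightarrow> (nat \<Rightarrow> nat) \<Rightarrow> nat) \<Rightarrow> nat \<Rightarrow> nat \<Rightarrow> nat \<Rightarrow> (nat \<Rightarrow> nat) \<Rightarrow> (nat \<Rightarrow> nat) \<Rightarrow> bool" where
  "mobile f a i j v1 v2 \<longleftrightarrow> f a v1 = i \<and> f a v2 = j \<and> i \<noteq> j"

definition intermediate :: "nat \<Rightarrow> nat \<Rightarrow> (nat \<Rightarrow> (nat \<Rightarrow> nat) \<Rightarrow> nat) \<Rightarrow> nat \<Rightarrow> nat \<Rightarrow> nat \<Rightarrow> (nat \<Rightarrow> nat) \<Rightarrow> (nat \<Rightarrow> nat) \<Rightarrow> bool" where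
  "intermediate n k f s t i v1 v2 \<longleftrightarrow> switching_cost n f v1 v2 = 2 \<and> i \<in> {1..k} \<and> i \<notin> {s, t} \<and>
     (\<exists>a\<in>{1..n}. \<exists>b\<in>{1..n}. a \<noteq> b \<and> mobile f a s i v1 v2 \<and> mobile f b i t v1 v2)"

definition type1 :: "nat \<Rightarrow> nat \<Rightarrow> (nat \<Rightarrow> (nat \<Rightarrow> nat) \<Rightarrow> nat) \<Rightarrow> nat \<Rightarrow> (nat \<Rightarrow> nat) \<Rightarrow> bool" where
  "type1 n k f t v \<longleftrightarrow> t \<in> {1..k} \<and>
     (\<forall>s\<in>{1..k}. s \<noteq> t \<and> v s \<ge> 1 \<longrightarrow> switching_cost n f v (move s t v) = 1)"

definition type2_with :: "nat \<Rightarrow> nat \<Rightarrow> (nat \<Rightarrow> (nat \<Rightarrow> nat) \<Rightarrow> nat) \<Rightarrow> nat \<Rightarrow> nat \<Rightarrow> nat \<Rightarrow> (nat \<Rightarrow> nat) \<Rightarrow> bool" where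
  "type2_with n k f t i a v \<longleftrightarrow> t \<in> {1..k} \<and> i \<in> {1..k} \<and> a \<in> {1..n} \<and>
     (\<forall>s\<in>{1..k}. s \<notin> {i, t} \<and> v s \<ge> 1 \<longrightarrow>
        switching_cost n f v (move s t v) = 2 \<and>
        intermediate n k f s t i v (move s t v) \<and>
        mobile f a i t v (move s t v))"

definition type2 :: "nat \<Rightarrow> nat \<Rightarrow> (nat \<Rightarrow> (nat \<Rightarrow> nat) \<Rightarrow> nat) \<Rightarrow> nat \<Rightarrow> (nat \<Rightarrow> nat) \<Rightarrow> bool" where
  "type2 n k f t v \<longleftrightarrow> (\<exists>i a. type2_with n k f t i a v)"

definition nonempty_tasks :: "nat \<Rightarrow> (nat \<Rightarrow> nat) \<Rightarrow> nat set" where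
  "nonempty_tasks k v = {j\<in>{1..k}. v j \<ge> 1}"

end

theory Submission
  imports Defs
begin

lemma move_apply: "move s t u j = (if j = t then u t + 1 else if j = s then u s - 1 else u j)"
  unfolding move_def by auto

lemma card_filter1: "card {x\<in>{p}. P x} = (if P p then 1 else 0)"
proof -
  have "{x\<in>{p}. P x} = (if P p then {p} else {})" by auto
  thus ?thesis by simp
qed

lemma card_filter2: assumes "p \<noteq> q" shows "card {x\<in>{p,q}. P x} = (if P p then 1 else 0) + (if P q then 1 else 0)"
proof (cases "P p"; cases "P q")
  assume "P p" "P q" hence "{x\<in>{p,q}. P x} = {p,q}" by auto thus ?thesis using assms \<open>P p\<close> \<open>P q\<close> by simp
next
  assume "P p" "\<not> P q" hence "{x\<in>{p,q}. P x} = {p}" by auto thus ?thesis using \<open>P p\<close> \<open>\<not> P q\<close> by simp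
next
  assume "\<not> P p" "P q" hence "{x\<in>{p,q}. P x} = {q}" by auto thus ?thesis using \<open>\<not> P p\<close> \<open>P q\<close> by simp
next
  assume "\<not> P p" "\<not> P q" hence "{x\<in>{p,q}. P x} = {}" by auto thus ?thesis using \<open>\<not> P p\<close> \<open>\<not> P q\<close> by simp
qed

lemma key_abs:
  fixes pu pw qu qw s t :: nat
  assumes st: "s \<noteq> t" and dp: "pu \<noteq> pw" and dq: "qu \<noteq> qw"
   and b1: "(if pu = s then 1 else 0) + (if qu = s then 1 else 0) = (1::nat) + (if pw = s then 1 else 0) + (if qw = s then 1 else 0)"
   and b2: "(1::nat) + (if pu = t then 1 else 0) + (if qu = t then 1 else 0) = (if pw = t then 1 else 0) + (if qw = t then 1 else 0)"
   and b3: "\<And>j. j \<noteq> s \<Longrightarrow> j \<noteq> t \<Longrightarrow> (if pu = j then 1 else 0) + (if qu = j then (1::nat) else 0) = (if pw = j then 1 else 0) + (if qw = j then 1 else 0)"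
  shows "(pu = s \<and> pw = qu \<and> qw = t \<and> qu \<noteq> s \<and> qu \<noteq> t) \<or> (qu = s \<and> qw = pu \<and> pw = t \<and> pu \<noteq> s \<and> pu \<noteq> t)"
proof -
  note e1 = b3[of pu] and e2 = b3[of qu]
  show ?thesis using st dp dq b1 b2 e1 e2 by (auto split: if_splits)
qed

locale setting =
  fixes n k :: nat and f :: "nat \<Rightarrow> (nat \<Rightarrow> nat) \<Rightarrow> nat"
  assumes sd: "satisfies_demand n k f" and mc: "max_switching_cost_le n k f 2"
begin

lemma rng: "demand_vec n k u \<Longrightarrow> p \<in> {1..n} \<Longrightarrow> f p u \<in> {1..k}"
  using sd unfolding satisfies_demand_def by blast

lemma count: assumes "demand_vec n k u" shows "card {a\<in>{1..n}. f a u = j} = u j"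
proof (cases "j \<in> {1..k}")
  case True thus ?thesis using sd assms unfolding satisfies_demand_def by blast
next
  case False
  hence "{a\<in>{1..n}. f a u = j} = {}" using rng[OF assms] by fastforce
  moreover have "u j = 0" using assms False unfolding demand_vec_def by blast
  ultimately show ?thesis by simp
qed

lemma dv_move:
  assumes "demand_vec n k u" "s \<in> {1..k}" "t \<in> {1..k}" "s \<noteq> t" "u s \<ge> 1"
  shows "demand_vec n k (move s t u)"
proof -
  have z: "\<forall>j. j \<notin> {1..k} \<longrightarrow> move s t u j = 0"
    using assms unfolding demand_vec_def move_apply by auto
  have e: "\<And>j. int (move s t u j) = int (u j) - (if j = s then 1 else 0) + (if j = t then 1 else 0)"
    using assms by (auto simp: move_apply)
  have "int (\<Sum>j\<in>{1..k}. move s t u j) = (\<Sum>j\<in>{1..k}. int (move s t u j))" by simp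
  also have "\<dots> = (\<Sum>j\<in>{1..k}. int (u j)) - (\<Sum>j\<in>{1..k}. (if j = s then 1 else 0)) + (\<Sum>j\<in>{1..k}. (if j = t then 1 else 0))"
    unfolding e by (simp add: sum.distrib sum_subtractf)
  also have "\<dots> = int (\<Sum>j\<in>{1..k}. u j)" using assms(2,3) by simp
  finally have "(\<Sum>j\<in>{1..k}. move s t u j) = n" using assms(1) unfolding demand_vec_def by linarith
  thus ?thesis using z unfolding demand_vec_def by blast
qed

lemma adj_move:
  assumes "s \<in> {1..k}" "t \<in> {1..k}" "s \<noteq> t" "u s \<ge> 1"
  shows "adjacent k u (move s t u)"
proof -
  have e: "\<And>j. \<bar>int (u j) - int (move s t u j)\<bar> = (if j = s then 1 else 0) + (if j = t then 1 else 0)"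
    using assms by (auto simp: move_apply)
  show ?thesis unfolding adjacent_def e using assms by (simp add: sum.distrib)
qed

lemma cost3:
  assumes "demand_vec n k u" "s \<in> {1..k}" "t \<in> {1..k}" "s \<noteq> t" "u s \<ge> 1"
    and "w = move s t u"
    and "p \<in> {1..n}" "q \<in> {1..n}" "r \<in> {1..n}" "p \<noteq> q" "p \<noteq> r" "q \<noteq> r"
    and "f p u \<noteq> f p w" "f q u \<noteq> f q w" "f r u \<noteq> f r w"
  shows False
proof -
  have "switching_cost n f u w \<le> 2"
    using mc dv_move[OF assms(1-5)] adj_move[of s t u, OF assms(2-5)] assms(1,6)
    unfolding max_switching_cost_le_def by blast
  moreover have "{p,q,r} \<subseteq> {a\<in>{1..n}. f a u \<noteq> f a w}" using assms by auto
  hence "card {p,q,r} \<le> switching_cost n f u w" unfolding switching_cost_def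
    by (intro card_mono) auto
  ultimately show False using assms(10-12) by simp
qed

lemma balance:
  assumes "demand_vec n k u" "demand_vec n k w" "D \<subseteq> {1..n}"
    and "\<forall>p\<in>{1..n}. p \<notin> D \<longrightarrow> f p w = f p u"
  shows "w j + card {p\<in>D. f p u = j} = u j + card {p\<in>D. f p w = j}"
proof -
  have fin: "finite D" using assms(3) finite_subset by blast
  have 1: "{a\<in>{1..n}. f a u = j} = {a\<in>{1..n}-D. f a u = j} \<union> {p\<in>D. f p u = j}" using assms(3) by auto
  have 2: "{a\<in>{1..n}. f a w = j} = {a\<in>{1..n}-D. f a u = j} \<union> {p\<in>D. f p w = j}" using assms(3,4) by auto
  have "u j = card {a\<in>{1..n}-D. f a u = j} + card {p\<in>D. f p u = j}"
    using count[OF assms(1), of j] 1 fin by (simp add: card_Un_disjoint, subst (asm) card_Un_disjoint, auto)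
  moreover have "w j = card {a\<in>{1..n}-D. f a u = j} + card {p\<in>D. f p w = j}"
    using count[OF assms(2), of j] 2 fin by (simp add: card_Un_disjoint, subst (asm) card_Un_disjoint, auto)
  ultimately show ?thesis by simp
qed

lemma depart:
  assumes "demand_vec n k u" "demand_vec n k w" "w j < u j"
  shows "\<exists>p\<in>{1..n}. f p u = j \<and> f p w \<noteq> j"
proof (rule ccontr)
  assume "\<not> ?thesis"
  hence "{a\<in>{1..n}. f a u = j} \<subseteq> {a\<in>{1..n}. f a w = j}" by auto
  hence "card {a\<in>{1..n}. f a u = j} \<le> card {a\<in>{1..n}. f a w = j}" by (intro card_mono) auto
  thus False using count[OF assms(1)] count[OF assms(2)] assms(3) by simp
qed

lemma eqcount:
  assumes "demand_vec n k u" "demand_vec n k w" "w j = u j"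
    and "q \<in> {1..n}" "f q w = j" "f q u \<noteq> j"
  shows "\<exists>p\<in>{1..n}. f p u = j \<and> f p w \<noteq> j"
proof (rule ccontr)
  assume "\<not> ?thesis"
  hence s: "{a\<in>{1..n}. f a u = j} \<subseteq> {a\<in>{1..n}. f a w = j}" by auto
  have "card {a\<in>{1..n}. f a u = j} = card {a\<in>{1..n}. f a w = j}"
    using count[OF assms(1)] count[OF assms(2)] assms(3) by simp
  hence "{a\<in>{1..n}. f a u = j} = {a\<in>{1..n}. f a w = j}" using s by (intro card_subset_eq) auto
  thus False using assms(4-6) by blast
qed

lemma pos: assumes "demand_vec n k u" "p \<in> {1..n}" "f p u = j" shows "u j \<ge> 1"
proof -
  have "{a\<in>{1..n}. f a u = j} \<noteq> {}" using assms by auto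
  hence "card {a\<in>{1..n}. f a u = j} > 0" by (subst card_gt_0_iff) auto
  thus ?thesis using count[OF assms(1), of j] by linarith
qed

definition dir where
  "dir u s t g \<longleftrightarrow> g \<in> {1..n} \<and> f g u = s \<and> f g (move s t u) = t \<and>
     (\<forall>p\<in>{1..n}. p \<noteq> g \<longrightarrow> f p (move s t u) = f p u)"

definition via where
  "via u s t j b c \<longleftrightarrow> j \<in> {1..k} \<and> j \<noteq> s \<and> j \<noteq> t \<and> b \<in> {1..n} \<and> c \<in> {1..n} \<and> b \<noteq> c \<and>
     f b u = s \<and> f b (move s t u) = j \<and> f c u = j \<and> f c (move s t u) = t \<and>
     (\<forall>p\<in>{1..n}. p \<noteq> b \<longrightarrow> p \<noteq> c \<longrightarrow> f p (move s t u) = f p u)"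

lemma step:
  assumes u: "demand_vec n k u" and st: "s \<in> {1..k}" "t \<in> {1..k}" "s \<noteq> t" "u s \<ge> 1"
  shows "(\<exists>g. dir u s t g) \<or> (\<exists>j b c. via u s t j b c)"
proof -
  define w where "w = move s t u"
  have w: "demand_vec n k w" unfolding w_def by (rule dv_move[OF u st])
  define D where "D = {p\<in>{1..n}. f p u \<noteq> f p w}"
  have "switching_cost n f u w \<le> 2"
    using mc w adj_move[of s t u, OF st] u unfolding max_switching_cost_le_def w_def by blast
  hence cD: "card D \<le> 2" unfolding D_def switching_cost_def by simp
  have fD: "finite D" unfolding D_def by simp
  have Dsub: "D \<subseteq> {1..n}" unfolding D_def by auto
  have Dfix: "\<forall>p\<in>{1..n}. p \<notin> D \<longrightarrow> f p w = f p u" unfolding D_def by auto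
  have ws: "w s = u s - 1" "w t = u t + 1" "\<And>j. j \<noteq> s \<Longrightarrow> j \<noteq> t \<Longrightarrow> w j = u j"
    unfolding w_def using st by (auto simp: move_apply)
  obtain p0 where "p0 \<in> {1..n}" "f p0 u = s" "f p0 w \<noteq> s" using depart[OF u w, of s] ws st by auto
  hence "p0 \<in> D" unfolding D_def by auto
  hence "card D \<noteq> 0" using fD by auto
  hence "card D = 1 \<or> card D = 2" using cD by linarith
  have bal: "\<And>j. w j + card {p\<in>D. f p u = j} = u j + card {p\<in>D. f p w = j}"
    by (rule balance[OF u w Dsub Dfix])
  have rgu: "\<And>p. p \<in> D \<Longrightarrow> f p u \<in> {1..k}" using rng[OF u] Dsub by auto
  have rgw: "\<And>p. p \<in> D \<Longrightarrow> f p w \<in> {1..k}" using rng[OF w] Dsub by auto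
  show ?thesis
  proof (cases "card D = 1")
    case True
    then obtain p where D: "D = {p}" by (rule card_1_singletonE)
    note c1 = card_filter1[of p]
    have "f p u = s" using bal[of s] ws st unfolding D c1 by (auto split: if_splits)
    moreover have "f p w = t" using bal[of t] ws st unfolding D c1 by (auto split: if_splits)
    ultimately have "dir u s t p" unfolding dir_def using Dfix Dsub D w_def by auto
    thus ?thesis by blast
  next
    case False
    hence "card D = 2" using \<open>card D = 1 \<or> card D = 2\<close> by simp
    then obtain p q where D: "D = {p,q}" and pq: "p \<noteq> q" by (auto simp: card_2_iff)
    note c2 = card_filter2[OF pq]
    have dp: "f p u \<noteq> f p w" and dq: "f q u \<noteq> f q w" using D unfolding D_def by auto
    have b1: "w s + (if f p u = s then 1 else 0) + (if f q u = s then 1 else 0) = u s + (if f p w = s then 1 else 0) + (if f q w = s then 1 else 0)"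
      using bal[of s] unfolding D c2 by simp
    have b2: "w t + (if f p u = t then 1 else 0) + (if f q u = t then 1 else 0) = u t + (if f p w = t then 1 else 0) + (if f q w = t then 1 else 0)"
      using bal[of t] unfolding D c2 by simp
    have b3: "\<And>j. j \<noteq> s \<Longrightarrow> j \<noteq> t \<Longrightarrow> (if f p u = j then 1 else 0) + (if f q u = j then (1::nat) else 0) = (if f p w = j then 1 else 0) + (if f q w = j then 1 else 0)"
    proof -
      fix j assume "j \<noteq> s" "j \<noteq> t"
      hence "w j = u j" by (rule ws(3))
      thus "?thesis j" using bal[of j] unfolding D c2 by linarith
    qed
    have key: "(f p u = s \<and> f p w = f q u \<and> f q w = t \<and> f q u \<noteq> s \<and> f q u \<noteq> t) \<or>
               (f q u = s \<and> f q w = f p u \<and> f p w = t \<and> f p u \<noteq> s \<and> f p u \<noteq> t)"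
    proof -
      have b1': "(if f p u = s then 1 else 0) + (if f q u = s then 1 else 0) = (1::nat) + (if f p w = s then 1 else 0) + (if f q w = s then 1 else 0)"
        using b1 ws(1) st(4) by linarith
      have b2': "(1::nat) + (if f p u = t then 1 else 0) + (if f q u = t then 1 else 0) = (if f p w = t then 1 else 0) + (if f q w = t then 1 else 0)"
        using b2 ws(2) by linarith
      show ?thesis by (rule key_abs[OF st(3) dp dq b1' b2' b3])
    qed
    thus ?thesis
    proof
      assume h: "f p u = s \<and> f p w = f q u \<and> f q w = t \<and> f q u \<noteq> s \<and> f q u \<noteq> t"
      have "via u s t (f q u) p q" unfolding via_def using h pq rgu[of q] Dsub D Dfix w_def by auto
      thus ?thesis by blast
    next
      assume h: "f q u = s \<and> f q w = f p u \<and> f p w = t \<and> f p u \<noteq> s \<and> f p u \<noteq> t"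
      have "via u s t (f p u) q p" unfolding via_def using h pq rgu[of p] Dsub D Dfix w_def by auto
      thus ?thesis by blast
    qed
  qed
qed

end


context setting begin
lemma dirD: assumes "dir u s t g"
  shows "g \<in> {1..n}" "f g u = s" "f g (move s t u) = t"
    "\<And>p. p \<in> {1..n} \<Longrightarrow> p \<noteq> g \<Longrightarrow> f p (move s t u) = f p u"
  using assms unfolding dir_def by auto

lemma viaD: assumes "via u s t j b c"
  shows "j \<in> {1..k}" "j \<noteq> s" "j \<noteq> t" "b \<in> {1..n}" "c \<in> {1..n}" "b \<noteq> c"
    "f b u = s" "f b (move s t u) = j" "f c u = j" "f c (move s t u) = t"
    "\<And>p. p \<in> {1..n} \<Longrightarrow> p \<noteq> b \<Longrightarrow> p \<noteq> c \<Longrightarrow> f p (move s t u) = f p u"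
  using assms unfolding via_def by auto

lemma move_src_swap:
  assumes "u s1 \<ge> 1" "s1 \<noteq> s2" "s1 \<noteq> t" "s2 \<noteq> t"
  shows "move s2 t u = move s2 s1 (move s1 t u)"
  using assms by (intro ext) (auto simp: move_apply)

lemma dir_via:
  assumes u: "demand_vec n k u" and k: "s1 \<in> {1..k}" "s2 \<in> {1..k}" "t \<in> {1..k}"
    and d: "s1 \<noteq> s2" "s1 \<noteq> t" "s2 \<noteq> t" and p: "u s1 \<ge> 1" "u s2 \<ge> 1"
    and D: "dir u s1 t g" and V: "via u s2 t j b c"
  shows "c = g \<and> j = s1"
proof -
  note g = dirD[OF D] and v = viaD[OF V]
  have X1: "demand_vec n k (move s1 t u)" by (rule dv_move[OF u k(1,3) d(2) p(1)])
  have e: "move s2 t u = move s2 s1 (move s1 t u)" by (rule move_src_swap[of u s1 s2 t, OF p(1) d])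
  have ps: "move s1 t u s2 \<ge> 1" using p d by (simp add: move_apply)
  have "c = g"
  proof (rule ccontr)
    assume cg: "c \<noteq> g"
    have gb: "g \<noteq> b" using g(2) v(7) d(1) by auto
    show False
    proof (rule cost3[OF X1 k(2) k(1) d(1)[symmetric] ps e, of g b c])
      show "g \<in> {1..n}" "b \<in> {1..n}" "c \<in> {1..n}" using g v by auto
      show "g \<noteq> b" "g \<noteq> c" "b \<noteq> c" using gb cg v(6) by auto
      show "f g (move s1 t u) \<noteq> f g (move s2 t u)" using g(3) v(11)[OF g(1) gb cg[symmetric]] g(2) d(2) by simp
      show "f b (move s1 t u) \<noteq> f b (move s2 t u)" using g(4)[OF v(4) gb[symmetric]] v(7) v(8) v(2) by simp
      show "f c (move s1 t u) \<noteq> f c (move s2 t u)" using g(4)[OF v(5) cg] v(9) v(10) v(3) by simp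
    qed
  qed
  thus ?thesis using g(2) v(9) by simp
qed

lemma via_via:
  assumes u: "demand_vec n k u" and k: "s1 \<in> {1..k}" "s2 \<in> {1..k}" "t \<in> {1..k}"
    and d: "s1 \<noteq> s2" "s1 \<noteq> t" "s2 \<noteq> t" and p: "u s1 \<ge> 1" "u s2 \<ge> 1"
    and V1: "via u s1 t j1 b1 c1" and V2: "via u s2 t j2 b2 c2"
  shows "(c1 = c2 \<and> j1 = j2) \<or> (j1 = s2 \<and> j2 = s1)"
proof (cases "c1 = c2")
  case True thus ?thesis using viaD(9)[OF V1] viaD(9)[OF V2] by simp
next
  case False
  note v1 = viaD[OF V1] and v2 = viaD[OF V2]
  have X1: "demand_vec n k (move s1 t u)" by (rule dv_move[OF u k(1,3) d(2) p(1)])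
  have e: "move s2 t u = move s2 s1 (move s1 t u)" by (rule move_src_swap[of u s1 s2 t, OF p(1) d])
  have ps: "move s1 t u s2 \<ge> 1" using p d by (simp add: move_apply)
  have bb: "b1 \<noteq> b2" using v1(7) v2(7) d by auto
  have b1d: "f b1 (move s1 t u) \<noteq> f b1 (move s2 t u)"
  proof (cases "b1 = c2")
    case True thus ?thesis using v1(8) v2(10) v1(3) by simp
  next
    case False thus ?thesis using v1(8) v2(11)[OF v1(4) bb False] v1(7) v1(2) by simp
  qed
  have b2d: "f b2 (move s1 t u) \<noteq> f b2 (move s2 t u)"
  proof (cases "b2 = c1")
    case True thus ?thesis using v2(8) v1(10) v2(3) by simp
  next
    case False thus ?thesis using v2(8) v1(11)[OF v2(4) bb[symmetric] False] v2(7) v2(2) by simp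
  qed
  have c1d: "c1 \<noteq> b2 \<Longrightarrow> f c1 (move s1 t u) \<noteq> f c1 (move s2 t u)"
    using v1(10) v2(11)[OF v1(5) _ False] v1(9) v1(3) by auto
  have c2d: "c2 \<noteq> b1 \<Longrightarrow> f c2 (move s1 t u) \<noteq> f c2 (move s2 t u)"
    using v2(10) v1(11)[OF v2(5) _ ] v2(9) v2(3) False by auto
  have "c1 = b2"
  proof (rule ccontr)
    assume h: "c1 \<noteq> b2"
    show False by (rule cost3[OF X1 k(2) k(1) d(1)[symmetric] ps e, of b1 b2 c1])
      (use v1(4,5,6) v2(4) bb h b1d b2d c1d in auto)
  qed
  moreover have "c2 = b1"
  proof (rule ccontr)
    assume h: "c2 \<noteq> b1"
    show False by (rule cost3[OF X1 k(2) k(1) d(1)[symmetric] ps e, of b1 b2 c2])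
      (use v1(4) v2(4,5,6) bb h b1d b2d c2d in auto)
  qed
  ultimately show ?thesis using v1(9) v2(9) v1(7) v2(7) by simp
qed

lemma TF:
  assumes u: "demand_vec n k u" and k1: "s \<in> {1..k}" "T \<in> {1..k}" "s \<noteq> T" "u s \<ge> 1"
    and D: "dir u s T g"
    and k2: "s2 \<in> {1..k}" "T2 \<in> {1..k}" "s2 \<noteq> T2" "move s T u s2 \<ge> 1"
    and Y: "Y = move s2 T2 (move s T u)"
    and rq: "r \<in> {1..n}" "q \<in> {1..n}" "r \<noteq> q" "r \<noteq> g" "q \<noteq> g" "f r Y \<noteq> f r u" "f q Y \<noteq> f q u"
  shows "f g Y = T"
proof (rule ccontr)
  assume h: "f g Y \<noteq> T"
  note g = dirD[OF D]
  show False
  proof (rule cost3[OF dv_move[OF u k1] k2 Y, of r q g])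
    show "r \<in> {1..n}" "q \<in> {1..n}" "g \<in> {1..n}" "r \<noteq> q" "r \<noteq> g" "q \<noteq> g" using rq g(1) by auto
    show "f r (move s T u) \<noteq> f r Y" using g(4)[OF rq(1) rq(4)] rq(6) by simp
    show "f q (move s T u) \<noteq> f q Y" using g(4)[OF rq(2) rq(5)] rq(7) by simp
    show "f g (move s T u) \<noteq> f g Y" using g(3) h by simp
  qed
qed

lemma TO:
  assumes u: "demand_vec n k u" and k1: "s \<in> {1..k}" "T \<in> {1..k}" "s \<noteq> T" "u s \<ge> 1"
    and D: "dir u s T g"
    and k2: "s2 \<in> {1..k}" "T2 \<in> {1..k}" "s2 \<noteq> T2" "move s T u s2 \<ge> 1"
    and Y: "Y = move s2 T2 (move s T u)"
    and rq: "r \<in> {1..n}" "q \<in> {1..n}" "p \<in> {1..n}" "r \<noteq> q" "r \<noteq> p" "q \<noteq> p"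
      "r \<noteq> g" "q \<noteq> g" "p \<noteq> g" "f r Y \<noteq> f r u" "f q Y \<noteq> f q u" "f p Y \<noteq> f p u"
  shows False
proof -
  note g = dirD[OF D]
  show False
  proof (rule cost3[OF dv_move[OF u k1] k2 Y, of r q p])
    show "r \<in> {1..n}" "q \<in> {1..n}" "p \<in> {1..n}" "r \<noteq> q" "r \<noteq> p" "q \<noteq> p" using rq by auto
    show "f r (move s T u) \<noteq> f r Y" using g(4)[OF rq(1) rq(7)] rq(10) by simp
    show "f q (move s T u) \<noteq> f q Y" using g(4)[OF rq(2) rq(8)] rq(11) by simp
    show "f p (move s T u) \<noteq> f p Y" using g(4)[OF rq(3) rq(9)] rq(12) by simp
  qed
qed

lemma in_D:
  assumes u: "demand_vec n k u" and k1: "s \<in> {1..k}" "T \<in> {1..k}" "s \<noteq> T" "u s \<ge> 1"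
    and D: "dir u s T g"
    and k2: "s2 \<in> {1..k}" "T2 \<in> {1..k}" "s2 \<noteq> T2" "move s T u s2 \<ge> 1"
    and Y: "Y = move s2 T2 (move s T u)"
    and rq: "r \<in> {1..n}" "q \<in> {1..n}" "r \<noteq> q" "f r Y \<noteq> f r u" "f q Y \<noteq> f q u"
  shows "f g Y \<noteq> f g u"
proof
  assume h: "f g Y = f g u"
  hence "r \<noteq> g" "q \<noteq> g" using rq by auto
  hence "f g Y = T" by (rule TF[OF u k1 D k2 Y rq(1-3)]) (use rq in auto)
  thus False using h dirD(2)[OF D] k1(3) by simp
qed

lemma depart2:
  assumes "demand_vec n k u" "demand_vec n k w" "w j < u j"
  obtains p where "p \<in> {1..n}" "f p u = j" "f p w \<noteq> j"
  using depart[OF assms] by blast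

lemma arrive2:
  assumes "demand_vec n k u" "demand_vec n k w" "u j < w j"
  obtains p where "p \<in> {1..n}" "f p w = j" "f p u \<noteq> j"
  using depart[OF assms(2,1) assms(3)] by blast

lemma square:
  assumes u: "demand_vec n k u" and kk: "x \<in> {1..k}" "y \<in> {1..k}" "c \<in> {1..k}" "d \<in> {1..k}"
    and ds: "x \<noteq> y" "x \<noteq> c" "x \<noteq> d" "y \<noteq> c" "y \<noteq> d" "c \<noteq> d"
    and px: "u x \<ge> 1" and py: "u y \<ge> 1"
    and Dxc: "dir u x c gxc" and Dxd: "dir u x d gxd" and Dyc: "dir u y c gyc" and Dyd: "dir u y d gyd"
    and Y: "Y = move y d (move x c u)"
  shows "gxd = gxc" "gyd = gyc" "f gxc Y \<in> {c,d}" "f gyc Y \<in> {c,d}" "f gxc Y \<noteq> f gyc Y"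
    "\<And>p. p \<in> {1..n} \<Longrightarrow> p \<noteq> gxc \<Longrightarrow> p \<noteq> gyc \<Longrightarrow> f p Y = f p u"
proof -
  have Y1: "Y = move y d (move x c u)" by (rule Y)
  have Y2: "Y = move y c (move x d u)" unfolding Y using ds by (intro ext) (auto simp: move_apply)
  have Y3: "Y = move x d (move y c u)" unfolding Y using ds by (intro ext) (auto simp: move_apply)
  have Y4: "Y = move x c (move y d u)" unfolding Y using ds by (intro ext) (auto simp: move_apply)
  have m1: "move x c u y \<ge> 1" "move x d u y \<ge> 1" "move y c u x \<ge> 1" "move y d u x \<ge> 1"
    using ds px py by (auto simp: move_apply)
  have dY: "demand_vec n k Y" unfolding Y
    by (rule dv_move[OF dv_move[OF u kk(1,3) ds(2) px] kk(2,4) ds(5) m1(1)])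
  have Yx: "Y x < u x" "Y y < u y" "u c < Y c" "u d < Y d" unfolding Y using ds px py by (auto simp: move_apply)
  obtain qx where qx: "qx \<in> {1..n}" "f qx u = x" "f qx Y \<noteq> x" using depart2[OF u dY Yx(1)] by blast
  obtain qy where qy: "qy \<in> {1..n}" "f qy u = y" "f qy Y \<noteq> y" using depart2[OF u dY Yx(2)] by blast
  have qxy: "qx \<noteq> qy" using qx qy ds by auto
  note gxc = dirD[OF Dxc] and gxd = dirD[OF Dxd] and gyc = dirD[OF Dyc] and gyd = dirD[OF Dyd]
  have Inxc: "f gxc Y \<noteq> f gxc u"
    by (rule in_D[OF u kk(1,3) ds(2) px Dxc kk(2,4) ds(5) m1(1) Y1 qx(1) qy(1) qxy]) (use qx qy in auto)
  have Inxd: "f gxd Y \<noteq> f gxd u"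
    by (rule in_D[OF u kk(1,4) ds(3) px Dxd kk(2,3) ds(4) m1(2) Y2 qx(1) qy(1) qxy]) (use qx qy in auto)
  have Inyc: "f gyc Y \<noteq> f gyc u"
    by (rule in_D[OF u kk(2,3) ds(4) py Dyc kk(1,4) ds(3) m1(3) Y3 qx(1) qy(1) qxy]) (use qx qy in auto)
  have Inyd: "f gyd Y \<noteq> f gyd u"
    by (rule in_D[OF u kk(2,4) ds(5) py Dyd kk(1,3) ds(2) m1(4) Y4 qx(1) qy(1) qxy]) (use qx qy in auto)
  have nx: "gxc \<noteq> gyc" "gxc \<noteq> gyd" "gxd \<noteq> gyc" "gxd \<noteq> gyd"
    using gxc(2) gxd(2) gyc(2) gyd(2) ds by auto
  show e1: "gxd = gxc"
  proof (rule ccontr)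
    assume h: "gxd \<noteq> gxc"
    have "f gyc Y = c"
      by (rule TF[OF u kk(2,3) ds(4) py Dyc kk(1,4) ds(3) m1(3) Y3 gxc(1) gxd(1)])
        (use h nx Inxc Inxd in auto)
    moreover have "f gyd Y = d"
      by (rule TF[OF u kk(2,4) ds(5) py Dyd kk(1,3) ds(2) m1(4) Y4 gxc(1) gxd(1)])
        (use h nx Inxc Inxd in auto)
    ultimately have "gyc \<noteq> gyd" using ds by auto
    show False
      by (rule TO[OF u kk(2,4) ds(5) py Dyd kk(1,3) ds(2) m1(4) Y4 gxc(1) gxd(1) gyc(1)])
        (use h nx Inxc Inxd Inyc \<open>gyc \<noteq> gyd\<close> in auto)
  qed
  show e2: "gyd = gyc"
  proof (rule ccontr)
    assume h: "gyd \<noteq> gyc"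
    have "f gxc Y = c"
      by (rule TF[OF u kk(1,3) ds(2) px Dxc kk(2,4) ds(5) m1(1) Y1 gyc(1) gyd(1)])
        (use h nx Inyc Inyd in auto)
    moreover have "f gxd Y = d"
      by (rule TF[OF u kk(1,4) ds(3) px Dxd kk(2,3) ds(4) m1(2) Y2 gyc(1) gyd(1)])
        (use h nx Inyc Inyd in auto)
    ultimately have "gxc \<noteq> gxd" using ds by auto
    show False
      by (rule TO[OF u kk(1,4) ds(3) px Dxd kk(2,3) ds(4) m1(2) Y2 gyc(1) gyd(1) gxc(1)])
        (use h nx Inyc Inyd Inxc \<open>gxc \<noteq> gxd\<close> in auto)
  qed
  show fx: "\<And>p. p \<in> {1..n} \<Longrightarrow> p \<noteq> gxc \<Longrightarrow> p \<noteq> gyc \<Longrightarrow> f p Y = f p u"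
  proof (rule ccontr)
    fix p assume p: "p \<in> {1..n}" "p \<noteq> gxc" "p \<noteq> gyc" "f p Y \<noteq> f p u"
    have "f gxc Y = c"
      by (rule TF[OF u kk(1,3) ds(2) px Dxc kk(2,4) ds(5) m1(1) Y1 p(1) gyc(1)])
        (use p nx Inyc in auto)
    moreover have "f gxd Y = d"
      by (rule TF[OF u kk(1,4) ds(3) px Dxd kk(2,3) ds(4) m1(2) Y2 p(1) gyc(1)])
        (use p nx Inyc e1 in auto)
    ultimately show False using e1 ds by auto
  qed
  obtain ac where ac: "ac \<in> {1..n}" "f ac Y = c" "f ac u \<noteq> c" using arrive2[OF u dY Yx(3)] by blast
  obtain ad where ad: "ad \<in> {1..n}" "f ad Y = d" "f ad u \<noteq> d" using arrive2[OF u dY Yx(4)] by blast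
  have "ac = gxc \<or> ac = gyc" using fx[OF ac(1)] ac by auto
  moreover have "ad = gxc \<or> ad = gyc" using fx[OF ad(1)] ad by auto
  ultimately show "f gxc Y \<in> {c,d}" "f gyc Y \<in> {c,d}" "f gxc Y \<noteq> f gyc Y"
    using ac ad ds by auto
qed

end


context setting begin

lemma triangle:
  assumes u: "demand_vec n k u" and kk: "a \<in> {1..k}" "b \<in> {1..k}" "e \<in> {1..k}" "c \<in> {1..k}" "d \<in> {1..k}"
    and ds: "a \<noteq> b" "a \<noteq> e" "b \<noteq> e" "a \<noteq> c" "a \<noteq> d" "b \<noteq> c" "b \<noteq> d" "e \<noteq> c" "e \<noteq> d" "c \<noteq> d"
    and pa: "u a \<ge> 1" and pb: "u b \<ge> 1" and pe: "u e \<ge> 1"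
    and Dac: "dir u a c gac" and Dad: "dir u a d gad" and Dbc: "dir u b c gbc" and Dbd: "dir u b d gbd"
    and Dec: "dir u e c gec" and Ded: "dir u e d ged"
  shows False
proof -
  define Y1 where "Y1 = move b d (move a c u)"
  define Y2 where "Y2 = move e d (move b c u)"
  define Y3 where "Y3 = move e d (move a c u)"
  note s1 = square[OF u kk(1,2,4,5) ds(1,4,5,6,7,10) pa pb Dac Dad Dbc Dbd Y1_def]
  note s2 = square[OF u kk(2,3,4,5) ds(3,6,7,8,9,10) pb pe Dbc Dbd Dec Ded Y2_def]
  note s3 = square[OF u kk(1,3,4,5) ds(2,4,5,8,9,10) pa pe Dac Dad Dec Ded Y3_def]
  note gac = dirD[OF Dac] and gbc = dirD[OF Dbc] and gec = dirD[OF Dec]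
  have n: "gac \<noteq> gbc" "gac \<noteq> gec" "gbc \<noteq> gec" using gac(2) gbc(2) gec(2) ds by auto
  have dY1: "demand_vec n k Y1" unfolding Y1_def
    by (rule dv_move[OF dv_move[OF u kk(1,4) ds(4) pa] kk(2,5) ds(7)]) (use ds pb in \<open>simp add: move_apply\<close>)
  have dY2: "demand_vec n k Y2" unfolding Y2_def
    by (rule dv_move[OF dv_move[OF u kk(2,4) ds(6) pb] kk(3,5) ds(9)]) (use ds pe in \<open>simp add: move_apply\<close>)
  have e12: "Y2 = move e a Y1" unfolding Y1_def Y2_def using ds pa pb pe by (intro ext) (auto simp: move_apply)
  have e13: "Y3 = move e b Y1" unfolding Y1_def Y3_def using ds pa pb pe by (intro ext) (auto simp: move_apply)
  have e23: "Y3 = move a b Y2" unfolding Y2_def Y3_def using ds pa pb pe by (intro ext) (auto simp: move_apply)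
  have p1: "Y1 e \<ge> 1" "Y2 a \<ge> 1" unfolding Y1_def Y2_def using ds pa pe by (auto simp: move_apply)
  have f1: "f gac Y2 = a" "f gec Y1 = e" "f gbc Y3 = b" "f gec Y1 = e" "f gbc Y3 = b" "f gac Y2 = a"
    using s1(6)[OF gec(1)] s2(6)[OF gac(1)] s3(6)[OF gbc(1)] n gac(2) gbc(2) gec(2) by auto
  have c12: "f gbc Y1 = f gbc Y2"
  proof (rule ccontr)
    assume h: "f gbc Y1 \<noteq> f gbc Y2"
    show False
      by (rule cost3[OF dY1 kk(3,1) ds(2)[symmetric] p1(1) e12, of gac gec gbc])
        (use gac(1) gbc(1) gec(1) n h s1(3) s2(4) f1 ds in auto)
  qed
  have c13: "f gac Y1 = f gac Y3"
  proof (rule ccontr)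
    assume h: "f gac Y1 \<noteq> f gac Y3"
    show False
      by (rule cost3[OF dY1 kk(3,2) ds(3)[symmetric] p1(1) e13, of gbc gec gac])
        (use gac(1) gbc(1) gec(1) n h s1(4) s3(4) f1 ds in auto)
  qed
  have c23: "f gec Y2 = f gec Y3"
  proof (rule ccontr)
    assume h: "f gec Y2 \<noteq> f gec Y3"
    show False
      by (rule cost3[OF dY2 kk(1,2) ds(1) p1(2) e23, of gbc gac gec])
        (use gac(1) gbc(1) gec(1) n h s2(3) s3(3) f1 ds in auto)
  qed
  show False using s1(3,4,5) s2(3,4,5) s3(3,4,5) c12 c13 c23 by auto
qed

lemma mixed:
  assumes u: "demand_vec n k u" and kk: "x \<in> {1..k}" "y \<in> {1..k}" "E \<in> {1..k}" "T \<in> {1..k}"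
    and ds: "x \<noteq> y" "x \<noteq> E" "x \<noteq> T" "y \<noteq> E" "y \<noteq> T" "E \<noteq> T"
    and px: "u x \<ge> 1" and py: "u y \<ge> 1"
    and Dx: "dir u x E gx" and Dy: "dir u y E gy" and V: "via u x T i b al"
    and iy: "i \<noteq> y" and iE: "i \<noteq> E"
  shows False
proof -
  define Y where "Y = move y T (move x E u)"
  have Y2: "Y = move x T (move y E u)" unfolding Y_def using ds by (intro ext) (auto simp: move_apply)
  have Y3: "Y = move y E (move x T u)" unfolding Y_def using ds by (intro ext) (auto simp: move_apply)
  have m1: "move x E u y \<ge> 1" "move y E u x \<ge> 1" "move x T u y \<ge> 1"
    using ds px py by (auto simp: move_apply)
  have dY: "demand_vec n k Y" unfolding Y_def
    by (rule dv_move[OF dv_move[OF u kk(1,3) ds(2) px] kk(2,4) ds(5) m1(1)])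
  have dXT: "demand_vec n k (move x T u)" by (rule dv_move[OF u kk(1,4) ds(3) px])
  note v = viaD[OF V] and gx = dirD[OF Dx] and gy = dirD[OF Dy]
  have Yi: "Y i = u i" unfolding Y_def using ds iy iE v(2,3) by (auto simp: move_apply)
  have Yx: "Y x < u x" "Y y < u y" "u T < Y T" unfolding Y_def using ds px py by (auto simp: move_apply)
  obtain qx where qx: "qx \<in> {1..n}" "f qx u = x" "f qx Y \<noteq> x" using depart2[OF u dY Yx(1)] by blast
  obtain qy where qy: "qy \<in> {1..n}" "f qy u = y" "f qy Y \<noteq> y" using depart2[OF u dY Yx(2)] by blast
  have qxy: "qx \<noteq> qy" using qx qy ds by auto
  have Inx: "f gx Y \<noteq> f gx u"
    by (rule in_D[OF u kk(1,3) ds(2) px Dx kk(2,4) ds(5) m1(1) Y_def qx(1) qy(1) qxy]) (use qx qy in auto)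
  have Iny: "f gy Y \<noteq> f gy u"
    by (rule in_D[OF u kk(2,3) ds(4) py Dy kk(1,4) ds(3) m1(2) Y2 qx(1) qy(1) qxy]) (use qx qy in auto)
  have nn: "gx \<noteq> gy" "al \<noteq> gx" "al \<noteq> gy" "b \<noteq> gy" using gx(2) gy(2) v(7,9) v(2) iy ds by auto
  have fx2: "\<And>p. p \<in> {1..n} \<Longrightarrow> p \<noteq> gx \<Longrightarrow> p \<noteq> gy \<Longrightarrow> f p Y = f p u"
  proof (rule ccontr)
    fix r assume r: "r \<in> {1..n}" "r \<noteq> gx" "r \<noteq> gy" "f r Y \<noteq> f r u"
    have ex: "f gx Y = E"
      by (rule TF[OF u kk(1,3) ds(2) px Dx kk(2,4) ds(5) m1(1) Y_def r(1) gy(1)]) (use r nn Iny in auto)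
    have ey: "f gy Y = E"
      by (rule TF[OF u kk(2,3) ds(4) py Dy kk(1,4) ds(3) m1(2) Y2 r(1) gx(1)]) (use r nn Inx in auto)
    have fx3: "\<And>p. p \<in> {1..n} \<Longrightarrow> p \<noteq> gx \<Longrightarrow> p \<noteq> gy \<Longrightarrow> p \<noteq> r \<Longrightarrow> f p Y = f p u"
    proof (rule ccontr)
      fix p assume p: "p \<in> {1..n}" "p \<noteq> gx" "p \<noteq> gy" "p \<noteq> r" "f p Y \<noteq> f p u"
      show False
        by (rule TO[OF u kk(1,3) ds(2) px Dx kk(2,4) ds(5) m1(1) Y_def r(1) p(1) gy(1)])
          (use r p nn Iny in auto)
    qed
    obtain q where q: "q \<in> {1..n}" "f q Y = T" "f q u \<noteq> T" using arrive2[OF u dY Yx(3)] by blast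
    have "q \<noteq> gx" "q \<noteq> gy" using q(2) ex ey ds(6) by auto
    hence "q = r" using fx3[OF q(1)] q(2,3) by fastforce
    hence rT: "f r Y = T" using q by simp
    show False
    proof (cases "al = r")
      case True
      obtain p where p: "p \<in> {1..n}" "f p Y = i" "f p u \<noteq> i"
        using eqcount[OF dY u Yi[symmetric] v(5) v(9)] rT True v(3) by auto
      show False using fx3[OF p(1)] p ex ey rT iE v(3) by (cases "p = gx"; cases "p = gy"; cases "p = r") auto
    next
      case False
      have alY: "f al Y = i" using fx3[OF v(5)] nn False v(9) by simp
      have gxX: "f gx (move x T u) \<noteq> E"
      proof (cases "gx = b")
        case True thus ?thesis using v(8) iE by simp
      next
        case False thus ?thesis using v(11)[OF gx(1) False nn(2)[symmetric]] gx(2) ds(2) by simp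
      qed
      show False
        by (rule cost3[OF dXT kk(2,3) ds(4) m1(3) Y3, of al gy gx])
          (use v(5,10,3) gx(1) gy(1) nn alY ex ey gxX v(11)[OF gy(1) nn(4)[symmetric] nn(3)[symmetric]] gy(2) ds(4) in auto)
    qed
  qed
  have alY: "f al Y = i" using fx2[OF v(5)] nn v(9) by simp
  have gyX: "f gy (move x T u) = y" using v(11)[OF gy(1) nn(4)[symmetric] nn(3)[symmetric]] gy(2) by simp
  have gxX: "f gx (move x T u) \<noteq> f gx Y"
  proof (cases "gx = b")
    case True
    have "f gx Y \<noteq> i"
    proof
      assume h: "f gx Y = i"
      obtain p where p: "p \<in> {1..n}" "f p u = i" "f p Y \<noteq> i"
        using eqcount[OF u dY Yi gx(1) h] gx(2) v(2) by auto
      show False using fx2[OF p(1)] p gx(2) gy(2) v(2) iy by (cases "p = gx"; cases "p = gy") auto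
    qed
    thus ?thesis using True v(8) by simp
  next
    case False thus ?thesis using v(11)[OF gx(1) False nn(2)[symmetric]] gx(2) Inx by simp
  qed
  show False
    by (rule cost3[OF dXT kk(2,3) ds(4) m1(3) Y3, of al gy gx])
      (use v(5,10,3) gx(1) gy(1) nn alY gyX gxX Iny gy(2) in auto)
qed

end


lemma ex_avoid:
  assumes "finite F" "card F < card S" shows "\<exists>x\<in>S. x \<notin> F"
proof (rule ccontr)
  assume "\<not> ?thesis" hence "S \<subseteq> F" by auto
  hence "card S \<le> card F" using assms(1) by (rule card_mono[rotated])
  thus False using assms(2) by simp
qed

lemma card2le: "card {a, b::nat} \<le> 2"
  by (cases "a = b") auto

lemma card1le: "card {a::nat} \<le> 1" by simp

context setting begin

lemma via_parts:
  assumes V: "via u s t j b c"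
  shows "switching_cost n f u (move s t u) = 2" "intermediate n k f s t j u (move s t u)"
    "mobile f c j t u (move s t u)"
proof -
  note v = viaD[OF V]
  have "{p\<in>{1..n}. f p u \<noteq> f p (move s t u)} = {b, c}"
  proof (intro equalityI subsetI)
    fix p assume p: "p \<in> {p\<in>{1..n}. f p u \<noteq> f p (move s t u)}"
    show "p \<in> {b, c}"
    proof (rule ccontr)
      assume "p \<notin> {b, c}"
      hence "f p (move s t u) = f p u" using v(11)[of p] p by blast
      thus False using p by simp
    qed
  next
    fix p assume "p \<in> {b, c}"
    thus "p \<in> {p\<in>{1..n}. f p u \<noteq> f p (move s t u)}"
      using v(4,5,7,8,9,10) v(2,3) by auto
  qed
  thus c2: "switching_cost n f u (move s t u) = 2" unfolding switching_cost_def using v(6) by simp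
  have m1: "mobile f b s j u (move s t u)" unfolding mobile_def using v(7,8,2) by simp
  have m2: "mobile f c j t u (move s t u)" unfolding mobile_def using v(9,10,3) by simp
  show "intermediate n k f s t j u (move s t u)" unfolding intermediate_def
    using c2 v(1,2,3,4,5,6) m1 m2 by blast
  show "mobile f c j t u (move s t u)" by (rule m2)
qed

lemma via_type2:
  assumes "t \<in> {1..k}" "i \<in> {1..k}" "c \<in> {1..n}"
    and "\<forall>s\<in>{1..k}. s \<noteq> i \<longrightarrow> s \<noteq> t \<longrightarrow> u s \<ge> 1 \<longrightarrow> (\<exists>b. via u s t i b c)"
  shows "type2_with n k f t i c u"
  unfolding type2_with_def using assms via_parts by blast

lemma type2_via:
  assumes u: "demand_vec n k u" and h: "type2_with n k f t i a u"
    and s: "s \<in> {1..k}" "s \<noteq> i" "s \<noteq> t" "u s \<ge> 1"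
  shows "\<exists>b. via u s t i b a"
proof -
  have t: "t \<in> {1..k}" and a: "a \<in> {1..n}" using h unfolding type2_with_def by auto
  have c: "switching_cost n f u (move s t u) = 2" and m: "mobile f a i t u (move s t u)"
    using h s unfolding type2_with_def by auto
  have ma: "f a u = i" "f a (move s t u) = t" "i \<noteq> t" using m unfolding mobile_def by auto
  from step[OF u s(1) t s(3) s(4)] show ?thesis
  proof
    assume "\<exists>g. dir u s t g"
    then obtain g where D: "dir u s t g" by blast
    note g = dirD[OF D]
    have "{p\<in>{1..n}. f p u \<noteq> f p (move s t u)} = {g}"
    proof (intro equalityI subsetI)
      fix p assume p: "p \<in> {p\<in>{1..n}. f p u \<noteq> f p (move s t u)}"
      show "p \<in> {g}"
      proof (rule ccontr)
        assume "p \<notin> {g}"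
        hence "f p (move s t u) = f p u" using g(4)[of p] p by blast
        thus False using p by simp
      qed
    next
      fix p assume "p \<in> {g}"
      thus "p \<in> {p\<in>{1..n}. f p u \<noteq> f p (move s t u)}" using g(1,2,3) s(3) by auto
    qed
    hence "switching_cost n f u (move s t u) = 1" unfolding switching_cost_def by simp
    thus ?thesis using c by simp
  next
    assume "\<exists>j b c. via u s t j b c"
    then obtain j b c where V: "via u s t j b c" by blast
    note v = viaD[OF V]
    have "a = b \<or> a = c" using v(11)[OF a] ma by auto
    moreover have "a \<noteq> b" using ma v(7) s(2) by auto
    ultimately have "a = c" by simp
    hence "j = i" using v(9) ma by simp
    thus ?thesis using V \<open>a = c\<close> by blast
  qed
qed


lemma classify:
  assumes u: "demand_vec n k u" and t: "t \<in> {1..k}"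
    and cS: "card {s\<in>{1..k}. s \<noteq> t \<and> u s \<ge> 1} \<ge> 3"
  shows "(\<exists>i c. i \<in> {1..k} \<and> i \<noteq> t \<and> u i \<ge> 1 \<and> c \<in> {1..n} \<and>
            (\<forall>s\<in>{1..k}. s \<noteq> i \<longrightarrow> s \<noteq> t \<longrightarrow> u s \<ge> 1 \<longrightarrow> (\<exists>b. via u s t i b c))) \<or>
         (\<forall>s\<in>{1..k}. s \<noteq> t \<longrightarrow> u s \<ge> 1 \<longrightarrow> (\<exists>g. dir u s t g))"
proof (rule disjCI)
  assume "\<not> (\<forall>s\<in>{1..k}. s \<noteq> t \<longrightarrow> u s \<ge> 1 \<longrightarrow> (\<exists>g. dir u s t g))"
  then obtain s0 where s0: "s0 \<in> {1..k}" "s0 \<noteq> t" "u s0 \<ge> 1" and nd: "\<not> (\<exists>g. dir u s0 t g)" by blast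
  obtain j b0 c0 where V0: "via u s0 t j b0 c0" using step[OF u s0(1) t s0(2) s0(3)] nd by blast
  note v0 = viaD[OF V0]
  have uj: "u j \<ge> 1" by (rule pos[OF u v0(5) v0(9)])
  define S where "S = {s\<in>{1..k}. s \<noteq> t \<and> u s \<ge> 1}"
  have fS: "finite S" unfolding S_def by simp
  have cS3: "3 \<le> card S" using cS unfolding S_def .
  have "card {s0, j} < card S" using card2le[of s0 j] cS3 by linarith
  then obtain s3 where s3: "s3 \<in> S" "s3 \<notin> {s0, j}" using ex_avoid[of "{s0,j}" S] by blast
  have s3': "s3 \<in> {1..k}" "s3 \<noteq> t" "u s3 \<ge> 1" "s3 \<noteq> s0" "s3 \<noteq> j" using s3 unfolding S_def by auto
  have dj: "\<exists>g. dir u j t g"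
  proof (rule ccontr)
    assume "\<not> ?thesis"
    then obtain j' b' c' where V': "via u j t j' b' c'" using step[OF u v0(1) t v0(3) uj] by blast
    note v' = viaD[OF V']
    have "j' = s0" using via_via[OF u s0(1) v0(1) t v0(2)[symmetric] s0(2) v0(3) s0(3) uj V0 V'] v'(2) by auto
    show False
    proof (cases "\<exists>g. dir u s3 t g")
      case True
      then obtain g3 where "dir u s3 t g3" by blast
      thus False using dir_via[OF u s3'(1) s0(1) t s3'(4) s3'(2) s0(2) s3'(3) s0(3) _ V0] s3'(5) by auto
    next
      case False
      then obtain j3 b3 c3 where V3: "via u s3 t j3 b3 c3" using step[OF u s3'(1) t s3'(2) s3'(3)] by blast
      have "j3 = j" using via_via[OF u s0(1) s3'(1) t s3'(4)[symmetric] s0(2) s3'(2) s0(3) s3'(3) V0 V3] s3'(5) by auto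
      thus False using via_via[OF u v0(1) s3'(1) t s3'(5)[symmetric] v0(3) s3'(2) uj s3'(3) V' V3]
          \<open>j' = s0\<close> s3'(4) v0(2) by auto
    qed
  qed
  then obtain gj where Dj: "dir u j t gj" by blast
  have "\<forall>s\<in>{1..k}. s \<noteq> j \<longrightarrow> s \<noteq> t \<longrightarrow> u s \<ge> 1 \<longrightarrow> (\<exists>b. via u s t j b c0)"
  proof (intro ballI impI)
    fix s assume s: "s \<in> {1..k}" "s \<noteq> j" "s \<noteq> t" "u s \<ge> 1"
    show "\<exists>b. via u s t j b c0"
    proof (cases "s = s0")
      case True thus ?thesis using V0 by blast
    next
      case False
      show ?thesis
      proof (cases "\<exists>g. dir u s t g")
        case True
        then obtain g where "dir u s t g" by blast
        thus ?thesis using dir_via[OF u s(1) s0(1) t False s(3) s0(2) s(4) s0(3) _ V0] s(2) by auto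
      next
        case nd2: False
        then obtain js bs cs where Vs: "via u s t js bs cs" using step[OF u s(1) t s(3) s(4)] by blast
        have "cs = c0 \<and> js = j" using via_via[OF u s0(1) s(1) t False[symmetric] s0(2) s(3) s0(3) s(4) V0 Vs] s(2) by auto
        thus ?thesis using Vs by blast
      qed
    qed
  qed
  thus "\<exists>i c. i \<in> {1..k} \<and> i \<noteq> t \<and> u i \<ge> 1 \<and> c \<in> {1..n} \<and>
            (\<forall>s\<in>{1..k}. s \<noteq> i \<longrightarrow> s \<noteq> t \<longrightarrow> u s \<ge> 1 \<longrightarrow> (\<exists>b. via u s t i b c))"
    using v0(1,3,5) uj by blast
qed

end


lemma card3le: "card {a,b,c::nat} \<le> 3" by (auto simp: card_insert_if)
lemma card4le: "card {a,b,c,d::nat} \<le> 4" by (auto simp: card_insert_if)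

theorem lemma4p8:
  fixes n k :: nat and f :: "nat \<Rightarrow> (nat \<Rightarrow> nat) \<Rightarrow> nat" and v :: "nat \<Rightarrow> nat"
  assumes "n \<ge> 4" and "k \<ge> 5"
    and "satisfies_demand n k f"
    and "max_switching_cost_le n k f 2"
    and "demand_vec n k v"
    and "card (nonempty_tasks k v) \<ge> 4"
  shows "(\<exists>t. type2 n k f t v \<and> card (nonempty_tasks k v - {t}) \<ge> 4) \<and>
         (\<forall>t i a. type2_with n k f t i a v \<and> card (nonempty_tasks k v - {t}) \<ge> 4 \<longrightarrow>
            (\<exists>a'. type2_with n k f t i a' (move i t v)))"
proof -
  interpret setting n k f using assms(3,4) by unfold_locales
  define N where "N = nonempty_tasks k v"
  have v: "demand_vec n k v" by (rule assms(5))
  have Nmem: "\<And>s. s \<in> N \<longleftrightarrow> s \<in> {1..k} \<and> v s \<ge> 1" by (simp add: N_def nonempty_tasks_def)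
  have fN: "finite N" unfolding N_def nonempty_tasks_def by simp
  have SN: "\<And>T. {s\<in>{1..k}. s \<noteq> T \<and> v s \<ge> 1} = N - {T}" using Nmem by auto
  have cN: "card N \<ge> 4" using assms(6) unfolding N_def .
  have cNT: "\<And>T. card (N - {T}) \<ge> card N - 1" using fN by (simp add: card_Diff_singleton_if)
  have dirall: "\<And>T. T \<in> {1..k} \<Longrightarrow> card (N - {T}) \<ge> 4 \<Longrightarrow> \<not> (\<exists>t. type2 n k f t v \<and> card (N - {t}) \<ge> 4) \<Longrightarrow>
      \<forall>s\<in>{1..k}. s \<noteq> T \<longrightarrow> v s \<ge> 1 \<longrightarrow> (\<exists>g. dir v s T g)"
  proof -
    fix T assume T: "T \<in> {1..k}" "card (N - {T}) \<ge> 4" and nt: "\<not> (\<exists>t. type2 n k f t v \<and> card (N - {t}) \<ge> 4)"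
    have "card {s\<in>{1..k}. s \<noteq> T \<and> v s \<ge> 1} \<ge> 3" unfolding SN using T(2) by simp
    from classify[OF v T(1) this] show "\<forall>s\<in>{1..k}. s \<noteq> T \<longrightarrow> v s \<ge> 1 \<longrightarrow> (\<exists>g. dir v s T g)"
    proof
      assume "\<exists>i c. i \<in> {1..k} \<and> i \<noteq> T \<and> v i \<ge> 1 \<and> c \<in> {1..n} \<and>
            (\<forall>s\<in>{1..k}. s \<noteq> i \<longrightarrow> s \<noteq> T \<longrightarrow> v s \<ge> 1 \<longrightarrow> (\<exists>b. via v s T i b c))"
      then obtain i c where ic: "i \<in> {1..k}" "c \<in> {1..n}"
        "\<forall>s\<in>{1..k}. s \<noteq> i \<longrightarrow> s \<noteq> T \<longrightarrow> v s \<ge> 1 \<longrightarrow> (\<exists>b. via v s T i b c)" by blast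
      have "type2_with n k f T i c v" by (rule via_type2[OF T(1) ic])
      hence "type2 n k f T v" unfolding type2_def by blast
      thus ?thesis using nt T(2) by blast
    qed
  qed
  have B: "\<exists>t. type2 n k f t v \<and> card (N - {t}) \<ge> 4"
  proof (rule ccontr)
    assume nt: "\<not> ?thesis"
    show False
    proof (cases "card N \<ge> 5")
      case True
      obtain T1 where T1: "T1 \<in> N" using ex_avoid[of "{}" N] True by auto
      obtain T2 where T2: "T2 \<in> N" "T2 \<notin> {T1}" using ex_avoid[of "{T1}" N] True by auto
      have c12: "card (N - {T1}) \<ge> 4" "card (N - {T2}) \<ge> 4" using cNT[of T1] cNT[of T2] True by auto
      have D1: "\<forall>s\<in>{1..k}. s \<noteq> T1 \<longrightarrow> v s \<ge> 1 \<longrightarrow> (\<exists>g. dir v s T1 g)"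
        using dirall[OF _ c12(1) nt] T1 Nmem by blast
      have D2: "\<forall>s\<in>{1..k}. s \<noteq> T2 \<longrightarrow> v s \<ge> 1 \<longrightarrow> (\<exists>g. dir v s T2 g)"
        using dirall[OF _ c12(2) nt] T2 Nmem by blast
      have "card {T1,T2} < card N" using card2le[of T1 T2] True by linarith
      then obtain a where a: "a \<in> N" "a \<notin> {T1,T2}" using ex_avoid[of "{T1,T2}" N] by auto
      have "card {T1,T2,a} < card N" using card3le[of T1 T2 a] True by linarith
      then obtain b where b: "b \<in> N" "b \<notin> {T1,T2,a}" using ex_avoid[of "{T1,T2,a}" N] by auto
      have "card {T1,T2,a,b} < card N" using card4le[of T1 T2 a b] True by linarith
      then obtain e where e: "e \<in> N" "e \<notin> {T1,T2,a,b}" using ex_avoid[of "{T1,T2,a,b}" N] by auto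
      have kk: "a \<in> {1..k}" "b \<in> {1..k}" "e \<in> {1..k}" "T1 \<in> {1..k}" "T2 \<in> {1..k}"
        and pp: "v a \<ge> 1" "v b \<ge> 1" "v e \<ge> 1" using a b e T1 T2 Nmem by auto
      have nT: "a \<noteq> T1" "b \<noteq> T1" "e \<noteq> T1" "a \<noteq> T2" "b \<noteq> T2" "e \<noteq> T2" using a b e by auto
      obtain g1 where g1: "dir v a T1 g1" using D1 kk nT pp by blast
      obtain g2 where g2: "dir v a T2 g2" using D2 kk nT pp by blast
      obtain g3 where g3: "dir v b T1 g3" using D1 kk nT pp by blast
      obtain g4 where g4: "dir v b T2 g4" using D2 kk nT pp by blast
      obtain g5 where g5: "dir v e T1 g5" using D1 kk nT pp by blast
      obtain g6 where g6: "dir v e T2 g6" using D2 kk nT pp by blast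
      show False
        by (rule triangle[OF v kk _ _ _ _ _ _ _ _ _ _ pp g1 g2 g3 g4 g5 g6]) (use a b e T2 in auto)
    next
      case False
      hence cN4: "card N = 4" using cN by simp
      have "card N < card {1..k}" using cN4 assms(2) by simp
      then obtain E where E: "E \<in> {1..k}" "E \<notin> N" using ex_avoid[of N "{1..k}"] fN by auto
      have vE: "\<not> v E \<ge> 1" using E Nmem by auto
      have "N - {E} = N" using E by auto
      hence cE: "card (N - {E}) \<ge> 4" using cN by simp
      have DE: "\<forall>s\<in>{1..k}. s \<noteq> E \<longrightarrow> v s \<ge> 1 \<longrightarrow> (\<exists>g. dir v s E g)" by (rule dirall[OF E(1) cE nt])
      obtain T where T: "T \<in> N" using ex_avoid[of "{}" N] cN4 by auto
      have Tk: "T \<in> {1..k}" using T Nmem by auto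
      have cT: "card (N - {T}) = 3" using cN4 T fN by (simp add: card_Diff_singleton_if)
      have "card {s\<in>{1..k}. s \<noteq> T \<and> v s \<ge> 1} \<ge> 3" unfolding SN using cT by simp
      from classify[OF v Tk this] show False
      proof
        assume "\<exists>i c. i \<in> {1..k} \<and> i \<noteq> T \<and> v i \<ge> 1 \<and> c \<in> {1..n} \<and>
            (\<forall>s\<in>{1..k}. s \<noteq> i \<longrightarrow> s \<noteq> T \<longrightarrow> v s \<ge> 1 \<longrightarrow> (\<exists>b. via v s T i b c))"
        then obtain i c where ic: "i \<in> {1..k}" "i \<noteq> T" "v i \<ge> 1" "c \<in> {1..n}"
          "\<forall>s\<in>{1..k}. s \<noteq> i \<longrightarrow> s \<noteq> T \<longrightarrow> v s \<ge> 1 \<longrightarrow> (\<exists>b. via v s T i b c)" by blast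
        have "card {T,i} < card N" using card2le[of T i] cN4 by linarith
        then obtain x where x: "x \<in> N" "x \<notin> {T,i}" using ex_avoid[of "{T,i}" N] by auto
        have "card {T,i,x} < card N" using card3le[of T i x] cN4 by linarith
        then obtain y where y: "y \<in> N" "y \<notin> {T,i,x}" using ex_avoid[of "{T,i,x}" N] by auto
        have kk: "x \<in> {1..k}" "y \<in> {1..k}" and pp: "v x \<ge> 1" "v y \<ge> 1" using x y Nmem by auto
        obtain b where Vx: "via v x T i b c" using ic(5) kk x pp by blast
        have xyE: "x \<noteq> E" "y \<noteq> E" using x y E by auto
        obtain gx where gx: "dir v x E gx" using DE kk pp xyE by blast
        obtain gy where gy: "dir v y E gy" using DE kk pp xyE by blast
        have iE: "i \<noteq> E" using ic(3) vE by auto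
        show False
          by (rule mixed[OF v kk E(1) Tk _ _ _ _ _ _ pp gx gy Vx _ iE]) (use x y E T in auto)
      next
        assume DT: "\<forall>s\<in>{1..k}. s \<noteq> T \<longrightarrow> v s \<ge> 1 \<longrightarrow> (\<exists>g. dir v s T g)"
        have "card {T} < card N" using cN4 by simp
        then obtain a where a: "a \<in> N" "a \<notin> {T}" using ex_avoid[of "{T}" N] by auto
        have "card {T,a} < card N" using card2le[of T a] cN4 by linarith
        then obtain b where b: "b \<in> N" "b \<notin> {T,a}" using ex_avoid[of "{T,a}" N] by auto
        have "card {T,a,b} < card N" using card3le[of T a b] cN4 by linarith
        then obtain e where e: "e \<in> N" "e \<notin> {T,a,b}" using ex_avoid[of "{T,a,b}" N] by auto
        have kk: "a \<in> {1..k}" "b \<in> {1..k}" "e \<in> {1..k}"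
          and pp: "v a \<ge> 1" "v b \<ge> 1" "v e \<ge> 1" using a b e Nmem by auto
        have nE: "a \<noteq> E" "b \<noteq> E" "e \<noteq> E" "a \<noteq> T" "b \<noteq> T" "e \<noteq> T" using a b e E by auto
        obtain g1 where g1: "dir v a E g1" using DE kk nE pp by blast
        obtain g2 where g2: "dir v a T g2" using DT kk nE pp by blast
        obtain g3 where g3: "dir v b E g3" using DE kk nE pp by blast
        obtain g4 where g4: "dir v b T g4" using DT kk nE pp by blast
        obtain g5 where g5: "dir v e E g5" using DE kk nE pp by blast
        obtain g6 where g6: "dir v e T g6" using DT kk nE pp by blast
        show False
          by (rule triangle[OF v kk E(1) Tk _ _ _ _ _ _ _ _ _ _ pp g1 g2 g3 g4 g5 g6]) (use a b e E T in auto)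
      qed
    qed
  qed
  have C: "\<forall>t i a. type2_with n k f t i a v \<and> card (N - {t}) \<ge> 4 \<longrightarrow>
            (\<exists>a'. type2_with n k f t i a' (move i t v))"
  proof (intro allI impI)
    fix t i a assume H: "type2_with n k f t i a v \<and> card (N - {t}) \<ge> 4"
    have H1: "type2_with n k f t i a v" and hc: "card (N - {t}) \<ge> 4" using H by auto
    have ht: "t \<in> {1..k}" and hi: "i \<in> {1..k}" and ha: "a \<in> {1..n}" using H1 unfolding type2_with_def by auto
    define M where "M = (N - {t}) - {i}"
    have Mmem: "\<And>s. s \<in> M \<longleftrightarrow> s \<in> {1..k} \<and> v s \<ge> 1 \<and> s \<noteq> t \<and> s \<noteq> i" unfolding M_def using Nmem by auto
    have fM: "finite M" unfolding M_def using fN by simp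
    have "card (N - {t}) - card {i} \<le> card M" unfolding M_def by (rule diff_card_le_card_Diff) simp
    hence cM: "card M \<ge> 3" using hc by simp
    have HV: "\<And>s. s \<in> M \<Longrightarrow> \<exists>b. via v s t i b a"
      using type2_via[OF v H1] Mmem by blast
    obtain s0 where s0: "s0 \<in> M" using ex_avoid[of "{}" M] cM by auto
    have "card {s0} < card M" using cM by simp
    then obtain s1 where s1: "s1 \<in> M" "s1 \<notin> {s0}" using ex_avoid[of "{s0}" M] by auto
    have "card {s0,s1} < card M" using cM card2le[of s0 s1] by linarith
    then obtain s2 where s2: "s2 \<in> M" "s2 \<notin> {s0,s1}" using ex_avoid[of "{s0,s1}" M] by auto
    obtain b0 where V0: "via v s0 t i b0 a" using HV[OF s0] by blast
    obtain b1 where V1: "via v s1 t i b1 a" using HV[OF s1(1)] by blast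
    have it: "i \<noteq> t" using viaD(3)[OF V0] .
    have vi: "v i \<ge> 1" by (rule pos[OF v ha viaD(9)[OF V0]])
    have m0: "s0 \<in> {1..k}" "v s0 \<ge> 1" "s0 \<noteq> t" "s0 \<noteq> i" using s0 Mmem by auto
    have m1: "s1 \<in> {1..k}" "v s1 \<ge> 1" "s1 \<noteq> t" "s1 \<noteq> i" "s1 \<noteq> s0" using s1 Mmem by auto
    have Dit: "dir v i t a"
    proof (cases "\<exists>g. dir v i t g")
      case True
      then obtain g where Dg: "dir v i t g" by blast
      have "a = g" using dir_via[OF v hi m0(1) ht m0(4)[symmetric] it m0(3) vi m0(2) Dg V0] by simp
      thus ?thesis using Dg by simp
    next
      case False
      then obtain j b' c' where V': "via v i t j b' c'" using step[OF v hi ht it vi] by blast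
      have "j = s0" using via_via[OF v hi m0(1) ht m0(4)[symmetric] it m0(3) vi m0(2) V' V0] viaD(2)[OF V'] by auto
      moreover have "j = s1" using via_via[OF v hi m1(1) ht m1(4)[symmetric] it m1(3) vi m1(2) V' V1] viaD(2)[OF V'] by auto
      ultimately show ?thesis using m1(5) by simp
    qed
    note dit = dirD[OF Dit]
    define v' where "v' = move i t v"
    have dv': "demand_vec n k v'" unfolding v'_def by (rule dv_move[OF v hi ht it vi])
    have v'eq: "\<And>s. s \<noteq> i \<Longrightarrow> s \<noteq> t \<Longrightarrow> v' s = v s" unfolding v'_def by (simp add: move_apply)
    have fv': "\<And>p. p \<in> {1..n} \<Longrightarrow> f p v' = (if p = a then t else f p v)"
      unfolding v'_def using dit(3) dit(4) by auto
    have Mm: "\<And>s. s \<in> M \<Longrightarrow> s \<in> {1..k} \<and> v' s \<ge> 1 \<and> s \<noteq> t \<and> s \<noteq> i" using Mmem v'eq by auto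
    have Dsi: "\<And>s. s \<in> M \<Longrightarrow> \<exists>b. dir v' s i b"
    proof -
      fix s assume s: "s \<in> M"
      obtain b where V: "via v s t i b a" using HV[OF s] by blast
      note vv = viaD[OF V]
      have sm: "s \<noteq> i" "s \<noteq> t" using s Mmem by auto
      have eqm: "move s i v' = move s t v" unfolding v'_def using sm it vi by (intro ext) (auto simp: move_apply)
      have "dir v' s i b" unfolding dir_def eqm
      proof (intro conjI ballI impI)
        show "b \<in> {1..n}" by (rule vv(4))
        show "f b v' = s" using fv'[OF vv(4)] vv(6) vv(7) by simp
        show "f b (move s t v) = i" by (rule vv(8))
        fix p assume p: "p \<in> {1..n}" "p \<noteq> b"
        show "f p (move s t v) = f p v'"
        proof (cases "p = a")
          case True thus ?thesis using vv(10) fv'[OF p(1)] by simp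
        next
          case False thus ?thesis using vv(11)[OF p(1) p(2) False] fv'[OF p(1)] by simp
        qed
      qed
      thus "\<exists>b. dir v' s i b" by blast
    qed
    have RS: "\<And>s. s \<in> M \<Longrightarrow> (\<exists>g. dir v' s t g) \<or> (\<exists>b c. via v' s t i b c)"
    proof -
      fix s assume s: "s \<in> M"
      note sm = Mm[OF s]
      from step[OF dv' _ ht _ _] sm
      have "(\<exists>g. dir v' s t g) \<or> (\<exists>j b c. via v' s t j b c)" by blast
      thus "(\<exists>g. dir v' s t g) \<or> (\<exists>b c. via v' s t i b c)"
      proof
        assume "\<exists>j b c. via v' s t j b c"
        then obtain j b c where Vj: "via v' s t j b c" by blast
        show ?thesis
        proof (cases "j = i")
          case True thus ?thesis using Vj by blast
        next
          case False
          have "card {s,j} < card M" using cM card2le[of s j] by linarith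
          then obtain y where y: "y \<in> M" "y \<notin> {s,j}" using ex_avoid[of "{s,j}" M] by auto
          note ym = Mm[OF y(1)]
          obtain gs where gs: "dir v' s i gs" using Dsi[OF s] by blast
          obtain gy where gy: "dir v' y i gy" using Dsi[OF y(1)] by blast
          have "False"
            by (rule mixed[OF dv' _ _ hi ht _ _ _ _ _ it _ _ gs gy Vj _ False]) (use sm ym y in auto)
          thus ?thesis ..
        qed
      qed simp
    qed
    show "\<exists>a'. type2_with n k f t i a' (move i t v)"
    proof (cases "\<forall>s\<in>M. \<exists>g. dir v' s t g")
      case True
      have m2: "s2 \<in> {1..k}" "v' s2 \<ge> 1" "s2 \<noteq> t" "s2 \<noteq> i" using Mm[OF s2(1)] by auto
      have m0': "v' s0 \<ge> 1" "v' s1 \<ge> 1" using Mm[OF s0] Mm[OF s1(1)] by auto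
      obtain g1 where g1: "dir v' s0 i g1" using Dsi[OF s0] by blast
      obtain g2 where g2: "dir v' s0 t g2" using True s0 by blast
      obtain g3 where g3: "dir v' s1 i g3" using Dsi[OF s1(1)] by blast
      obtain g4 where g4: "dir v' s1 t g4" using True s1 by blast
      obtain g5 where g5: "dir v' s2 i g5" using Dsi[OF s2(1)] by blast
      obtain g6 where g6: "dir v' s2 t g6" using True s2 by blast
      have False
        by (rule triangle[OF dv' m0(1) m1(1) m2(1) hi ht _ _ _ _ _ _ _ _ _ it m0'(1) m0'(2) m2(2) g1 g2 g3 g4 g5 g6])
          (use m0 m1 m2 s2 in auto)
      thus ?thesis ..
    next
      case False
      then obtain r where r: "r \<in> M" and nd: "\<not> (\<exists>g. dir v' r t g)" by blast
      obtain br c1 where Vr: "via v' r t i br c1" using RS[OF r] nd by blast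
      note rm = Mm[OF r]
      have all: "\<forall>s\<in>{1..k}. s \<noteq> i \<longrightarrow> s \<noteq> t \<longrightarrow> v' s \<ge> 1 \<longrightarrow> (\<exists>b. via v' s t i b c1)"
      proof (intro ballI impI)
        fix s assume s0': "s \<in> {1..k}" "s \<noteq> i" "s \<noteq> t" "v' s \<ge> 1"
        have s: "s \<in> M" using s0' v'eq Mmem by auto
        show "\<exists>b. via v' s t i b c1"
        proof (cases "s = r")
          case True thus ?thesis using Vr by blast
        next
          case sr: False
          from RS[OF s] show ?thesis
          proof
            assume "\<exists>g. dir v' s t g"
            then obtain g where Dg: "dir v' s t g" by blast
            have "i = s" using dir_via[OF dv' s0'(1) _ ht sr s0'(3) _ s0'(4) _ Dg Vr] rm by auto
            thus ?thesis using s0'(2) by simp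
          next
            assume "\<exists>b c. via v' s t i b c"
            then obtain b c where Vs: "via v' s t i b c" by blast
            have "c1 = c" using via_via[OF dv' _ s0'(1) ht _ _ s0'(3) _ s0'(4) Vr Vs] rm sr s0'(2) by auto
            thus ?thesis using Vs by blast
          qed
        qed
      qed
      have "type2_with n k f t i c1 v'" by (rule via_type2[OF ht hi viaD(5)[OF Vr] all])
      thus ?thesis unfolding v'_def by blast
    qed
  qed
  show ?thesis using B C unfolding N_def by blast
qed

end
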